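(* Let $(S_n)_{n\ge0}$ be defined by $S_0=3$, $S_1=1$, $S_2=3$ and $S_{n+1}=S_n+S_{n-1}+S_{n-2}$ for $n\ge 2$. Let $\alpha,\beta,\gamma$ be the roots of $x^3-x^2-x-1=0$ and $C_n=\alpha^n\beta^n+\alpha^n\gamma^n+\beta^n\gamma^n$ for $n\ge0$. Then for all integers $n,m\ge 0$: if $n\ge m$, $$S_nS_{n+m}=S_{2n+m}+S_mC_n-C_{n-m};$$ if $n<m$, $$S_nS_{n+m}=S_{2n+m}+S_mC_n-S_{m-n}.$$
   Context: $S_n$ is the generalized Lucas (generalized Tribonacci) sequence; it satisfies $S_n=\alpha^n+\beta^n+\gamma^n$. *)

theory Defs
  imports Complex_Main
begin

fun S :: "nat \<Rightarrow> int" where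
  "S 0 = 3"
| "S (Suc 0) = 1"
| "S (Suc (Suc 0)) = 3"
| "S (Suc (Suc (Suc n))) = S (Suc (Suc n)) + S (Suc n) + S n"

definition C :: "complex \<Rightarrow> complex \<Rightarrow> complex \<Rightarrow> nat \<Rightarrow> complex" where
  "C \<alpha> \<beta> \<gamma> n = \<alpha>^n * \<beta>^n + \<alpha>^n * \<gamma>^n + \<beta>^n * \<gamma>^n"

end

theory Submission
  imports Defs
begin

lemma key3:
  fixes a b c x y z :: complex
  shows "(a+b+c)*(a*x+b*y+c*z) = (a*a*x+b*b*y+c*c*z) + (x+y+z)*(a*b+a*c+b*c) - (a*b*z + a*c*y + b*c*x)"
  by (simp add: algebra_simps)

theorem mainTheorem3:
  fixes \<alpha> \<beta> \<gamma> :: complex and n m :: nat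
  assumes roots: "\<And>x::complex. x^3 - x^2 - x - 1 = (x - \<alpha>) * (x - \<beta>) * (x - \<gamma>)"
  shows "(n \<ge> m \<longrightarrow>
            of_int (S n * S (n + m)) =
              of_int (S (2*n + m)) + of_int (S m) * C \<alpha> \<beta> \<gamma> n - C \<alpha> \<beta> \<gamma> (n - m))
       \<and> (n < m \<longrightarrow>
            of_int (S n * S (n + m)) =
              of_int (S (2*n + m)) + of_int (S m) * C \<alpha> \<beta> \<gamma> n - of_int (S (m - n)))"
proof -
  have e3: "\<alpha>*\<beta>*\<gamma> = 1" using roots[of 0] by simp
  have h1: "(1::complex) - 1 - 1 - 1 = (1 - \<alpha>) * (1 - \<beta>) * (1 - \<gamma>)" using roots[of 1] by simp
  have h2: "(-1::complex)^3 - (-1)^2 - (-1) - 1 = (-1 - \<alpha>) * (-1 - \<beta>) * (-1 - \<gamma>)" using roots[of "-1"] by simp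
  have e1: "\<alpha>+\<beta>+\<gamma> = 1" and e2: "\<alpha>*\<beta>+\<alpha>*\<gamma>+\<beta>*\<gamma> = -1"
  proof -
    define s where "s = \<alpha>+\<beta>+\<gamma>"
    define p where "p = \<alpha>*\<beta>+\<alpha>*\<gamma>+\<beta>*\<gamma>"
    have A: "s = p + 2" using h1 e3 unfolding s_def p_def by (simp add: algebra_simps)
    have B: "s + p = 0" using h2 e3 unfolding s_def p_def by (simp add: algebra_simps)
    have "2*(p+1) = 0" using A B by (simp add: algebra_simps)
    then have "p + 1 = 0" unfolding mult_eq_0_iff by simp
    then have P: "p = -1" by (simp add: eq_neg_iff_add_eq_0)
    then show "\<alpha>+\<beta>+\<gamma> = 1" "\<alpha>*\<beta>+\<alpha>*\<gamma>+\<beta>*\<gamma> = -1" using A unfolding s_def p_def by simp_all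
  qed
  have ra: "\<alpha>^3 = \<alpha>^2+\<alpha>+1" using roots[of \<alpha>] by (simp add: diff_eq_eq algebra_simps)
  have rb: "\<beta>^3 = \<beta>^2+\<beta>+1" using roots[of \<beta>] by (simp add: diff_eq_eq algebra_simps)
  have rc: "\<gamma>^3 = \<gamma>^2+\<gamma>+1" using roots[of \<gamma>] by (simp add: diff_eq_eq algebra_simps)
  have Sf: "of_int (S k) = \<alpha>^k + \<beta>^k + \<gamma>^k" for k
  proof (induction k rule: S.induct)
    case 1 then show ?case by simp
  next
    case 2 then show ?case using e1 by simp
  next
    case 3
    have "\<alpha>^2+\<beta>^2+\<gamma>^2 = (\<alpha>+\<beta>+\<gamma>)^2 - 2*(\<alpha>*\<beta>+\<alpha>*\<gamma>+\<beta>*\<gamma>)"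
      by (simp add: power2_eq_square algebra_simps)
    also have "\<dots> = 3" unfolding e1 e2 by simp
    finally show ?case by (simp add: power2_eq_square)
  next
    case (4 k)
    have "\<alpha>^(k+3) = \<alpha>^(k+2)+\<alpha>^(k+1)+\<alpha>^k"
      using ra by (simp add: power_add algebra_simps power2_eq_square)
    moreover have "\<beta>^(k+3) = \<beta>^(k+2)+\<beta>^(k+1)+\<beta>^k"
      using rb by (simp add: power_add algebra_simps power2_eq_square)
    moreover have "\<gamma>^(k+3) = \<gamma>^(k+2)+\<gamma>^(k+1)+\<gamma>^k"
      using rc by (simp add: power_add algebra_simps power2_eq_square)
    ultimately show ?case using 4
      by (simp add: numeral_eq_Suc)
  qed
  show ?thesis
  proof (intro conjI impI)
    assume "m \<le> n"
    then obtain k where n: "n = m + k" by (metis le_add_diff_inverse)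
    have a: "(\<alpha>*\<beta>)^n * \<gamma>^m = (\<alpha>*\<beta>)^k"
    proof -
      have "(\<alpha>*\<beta>)^n * \<gamma>^m = (\<alpha>*\<beta>)^k * (\<alpha>*\<beta>*\<gamma>)^m" unfolding n
        by (simp add: power_add power_mult_distrib algebra_simps)
      then show ?thesis by (simp add: e3)
    qed
    have b: "(\<alpha>*\<gamma>)^n * \<beta>^m = (\<alpha>*\<gamma>)^k"
    proof -
      have "(\<alpha>*\<gamma>)^n * \<beta>^m = (\<alpha>*\<gamma>)^k * (\<alpha>*\<beta>*\<gamma>)^m" unfolding n
        by (simp add: power_add power_mult_distrib algebra_simps)
      then show ?thesis by (simp add: e3)
    qed
    have c: "(\<beta>*\<gamma>)^n * \<alpha>^m = (\<beta>*\<gamma>)^k"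
    proof -
      have "(\<beta>*\<gamma>)^n * \<alpha>^m = (\<beta>*\<gamma>)^k * (\<alpha>*\<beta>*\<gamma>)^m" unfolding n
        by (simp add: power_add power_mult_distrib algebra_simps)
      then show ?thesis by (simp add: e3)
    qed
    show "of_int (S n * S (n + m)) =
              of_int (S (2*n + m)) + of_int (S m) * C \<alpha> \<beta> \<gamma> n - C \<alpha> \<beta> \<gamma> (n - m)"
    proof -
      have 1: "of_int (S n * S (n+m)) = (\<alpha>^n+\<beta>^n+\<gamma>^n)*(\<alpha>^n*\<alpha>^m+\<beta>^n*\<beta>^m+\<gamma>^n*\<gamma>^m)"
        by (simp add: Sf power_add)
      have 2: "of_int (S (2*n+m)) = \<alpha>^n*\<alpha>^n*\<alpha>^m+\<beta>^n*\<beta>^n*\<beta>^m+\<gamma>^n*\<gamma>^n*\<gamma>^m"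
        by (simp add: Sf power_add mult_2)
      have 3: "C \<alpha> \<beta> \<gamma> n = \<alpha>^n*\<beta>^n+\<alpha>^n*\<gamma>^n+\<beta>^n*\<gamma>^n" by (simp add: C_def)
      have 4: "(\<alpha>^n*\<beta>^n)*\<gamma>^m + (\<alpha>^n*\<gamma>^n)*\<beta>^m + (\<beta>^n*\<gamma>^n)*\<alpha>^m = C \<alpha> \<beta> \<gamma> (n - m)"
        using a b c by (simp add: C_def power_mult_distrib n)
      show ?thesis unfolding 1 2 3 Sf[of m] 4[symmetric] by (rule key3)
    qed
  next
    assume "n < m"
    then obtain k where m: "m = n + k" by (metis less_imp_le le_add_diff_inverse)
    have a: "(\<alpha>*\<beta>)^n * \<gamma>^m = \<gamma>^k"
    proof -
      have "(\<alpha>*\<beta>)^n * \<gamma>^m = \<gamma>^k * (\<alpha>*\<beta>*\<gamma>)^n" unfolding m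
        by (simp add: power_add power_mult_distrib algebra_simps)
      then show ?thesis by (simp add: e3)
    qed
    have b: "(\<alpha>*\<gamma>)^n * \<beta>^m = \<beta>^k"
    proof -
      have "(\<alpha>*\<gamma>)^n * \<beta>^m = \<beta>^k * (\<alpha>*\<beta>*\<gamma>)^n" unfolding m
        by (simp add: power_add power_mult_distrib algebra_simps)
      then show ?thesis by (simp add: e3)
    qed
    have c: "(\<beta>*\<gamma>)^n * \<alpha>^m = \<alpha>^k"
    proof -
      have "(\<beta>*\<gamma>)^n * \<alpha>^m = \<alpha>^k * (\<alpha>*\<beta>*\<gamma>)^n" unfolding m
        by (simp add: power_add power_mult_distrib algebra_simps)
      then show ?thesis by (simp add: e3)
    qed
    show "of_int (S n * S (n + m)) =
              of_int (S (2*n + m)) + of_int (S m) * C \<alpha> \<beta> \<gamma> n - of_int (S (m - n))"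
    proof -
      have 1: "of_int (S n * S (n+m)) = (\<alpha>^n+\<beta>^n+\<gamma>^n)*(\<alpha>^n*\<alpha>^m+\<beta>^n*\<beta>^m+\<gamma>^n*\<gamma>^m)"
        by (simp add: Sf power_add)
      have 2: "of_int (S (2*n+m)) = \<alpha>^n*\<alpha>^n*\<alpha>^m+\<beta>^n*\<beta>^n*\<beta>^m+\<gamma>^n*\<gamma>^n*\<gamma>^m"
        by (simp add: Sf power_add mult_2)
      have 3: "C \<alpha> \<beta> \<gamma> n = \<alpha>^n*\<beta>^n+\<alpha>^n*\<gamma>^n+\<beta>^n*\<gamma>^n" by (simp add: C_def)
      have 4: "(\<alpha>^n*\<beta>^n)*\<gamma>^m + (\<alpha>^n*\<gamma>^n)*\<beta>^m + (\<beta>^n*\<gamma>^n)*\<alpha>^m = of_int (S (m - n))"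
        using a b c by (simp add: Sf power_mult_distrib m)
      show ?thesis unfolding 1 2 3 Sf[of m] 4[symmetric] by (rule key3)
    qed
  qed
qed

end
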